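(* Let $C,D$ be sets and let $\bot:=CD\mathcal y$ be the $(C\mathcal y,D\mathcal y)$-bicomodule corresponding to the terminal span $C\leftarrow C\times D\to D$. The operation $m\mapsto m^\vee:=[m,\bot]_{C\mathcal y,D\mathcal y}$ restricts to mutually inverse equivalences between the category of conjunctive $(C\mathcal y,D\mathcal y)$-bicomodules and the opposite of the category of linear $(C\mathcal y,D\mathcal y)$-bicomodules. Explicitly, for a span $C\leftarrow M\to D$ with fibers $M_a$ over $a\in C$ (each a set over $D$), $$\Big(\sum_{a\in C}M_a\mathcal y\Big)^\vee\cong\sum_{a\in C}\mathcal y^{M_a}\qquad\text{and}\qquad\Big(\sum_{a\in C}\mathcal y^{M_a}\Big)^\vee\cong\sum_{a\in C}M_a\mathcal y.$$
   Context: Bicomodules between discrete categories $C\mathcal y,D\mathcal y$ (comonoids in $(\mathbf{Poly},\mathcal y,\triangleleft)$ with linear carrier) are polynomials $m$ with compatible coactions; a linear one $M\mathcal y$ is a span $C\leftarrow M\to D$ (corresponding prafunctor $\Sigma\Delta$), a conjunctive one has exactly one position over each $a\in C$, i.e. is $\sum_{a\in C}\mathcal y^{m[a]}$ with each $m[a]$ a set over $D$ (corresponding prafunctor $\Pi\Delta$). For such bicomodules $q,r$, the local internal hom is $[q,r]_{C\mathcal y,D\mathcal y}:=\sum_{a\in C}\sum_{\varphi\in\mathbf{Set}[D](q_a,r_a)}\mathcal y^{\sum_{j\in q_a(1)}r[\varphi(j)]}$, where $q_a$ is the summand over $a$, $\mathbf{Set}[D](q_a,r_a)$ is the set of natural transformations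 between the associated functors $D\text{-}\mathbf{Set}\to\mathbf{Set}$, $X\mapsto\sum_{j\in q_a(1)}D\text{-}\mathbf{Set}(q[j],X)$, and $\varphi(j)$ is the image position. It is contravariant in $q$. *)

theory Defs
  imports Main
begin

text \<open>Bicomodules between discrete categories C y and D y (C :: 'c set, D :: 'd set).
  Such a bicomodule is a polynomial whose positions lie over elements a of C and whose
  directions are labelled by elements of D.\<close>

record ('c, 'p, 'e, 'd) bicomod =
  pos :: "'c \<Rightarrow> 'p set"
  dir :: "'c \<Rightarrow> 'p \<Rightarrow> 'e set"
  lab :: "'c \<Rightarrow> 'p \<Rightarrow> 'e \<Rightarrow> 'd"

definition wf_bicomod :: "'c set \<Rightarrow> 'd set \<Rightarrow> ('c, 'p, 'e, 'd) bicomod \<Rightarrow> bool" where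
  "wf_bicomod C D m \<longleftrightarrow>
     (\<forall>a. a \<notin> C \<longrightarrow> pos m a = {}) \<and>
     (\<forall>a\<in>C. \<forall>i\<in>pos m a. \<forall>e\<in>dir m a i. lab m a i e \<in> D)"

definition lin_bicomod :: "'c set \<Rightarrow> 'd set \<Rightarrow> ('c, 'p, 'e, 'd) bicomod \<Rightarrow> bool" where
  "lin_bicomod C D m \<longleftrightarrow> wf_bicomod C D m \<and>
     (\<forall>a\<in>C. \<forall>i\<in>pos m a. \<exists>!e. e \<in> dir m a i)"

definition conj_bicomod :: "'c set \<Rightarrow> 'd set \<Rightarrow> ('c, 'p, 'e, 'd) bicomod \<Rightarrow> bool" where
  "conj_bicomod C D m \<longleftrightarrow> wf_bicomod C D m \<and> (\<forall>a\<in>C. \<exists>!i. i \<in> pos m a)"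

text \<open>Set[D](q_a, r_a): morphisms of the polynomials q_a, r_a over D (forward map on
  positions, backward label-preserving maps on directions), i.e. natural transformations
  between the associated functors D-Set -> Set in their (Yoneda) polynomial form.
  Stored extensionally (undefined outside the relevant domains), so that equality of
  such morphisms is plain equality.\<close>
definition natD :: "('c, 'p, 'e, 'd) bicomod \<Rightarrow> ('c, 'q, 'f, 'd) bicomod \<Rightarrow> 'c
                     \<Rightarrow> (('p \<Rightarrow> 'q) \<times> ('p \<Rightarrow> 'f \<Rightarrow> 'e)) set" where
  "natD q r a = {(f, g).
      (\<forall>i\<in>pos q a. f i \<in> pos r a \<and>
          (\<forall>e\<in>dir r a (f i). g i e \<in> dir q a i \<and> lab q a i (g i e) = lab r a (f i) e)) \<and>
      (\<forall>i. i \<notin> pos q a \<longrightarrow> f i = undefined \<and> g i = undefined) \<and>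
      (\<forall>i\<in>pos q a. \<forall>e. e \<notin> dir r a (f i) \<longrightarrow> g i e = undefined)}"

definition ihom :: "'c set \<Rightarrow> ('c, 'p, 'e, 'd) bicomod \<Rightarrow> ('c, 'q, 'f, 'd) bicomod
     \<Rightarrow> ('c, ('p \<Rightarrow> 'q) \<times> ('p \<Rightarrow> 'f \<Rightarrow> 'e), 'p \<times> 'f, 'd) bicomod" where
  "ihom C q r = \<lparr> pos = (\<lambda>a. if a \<in> C then natD q r a else {}),
                  dir = (\<lambda>a \<phi>. {(i, e). i \<in> pos q a \<and> e \<in> dir r a (fst \<phi> i)}),
                  lab = (\<lambda>a \<phi> ie. lab r a (fst \<phi> (fst ie)) (snd ie)) \<rparr>"

definition bot :: "'c set \<Rightarrow> 'd set \<Rightarrow> ('c, 'd, unit, 'd) bicomod" where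
  "bot C D = \<lparr> pos = (\<lambda>a. if a \<in> C then D else {}),
               dir = (\<lambda>a d. {()}),
               lab = (\<lambda>a d u. d) \<rparr>"

definition dual :: "'c set \<Rightarrow> 'd set \<Rightarrow> ('c, 'p, 'e, 'd) bicomod
     \<Rightarrow> ('c, ('p \<Rightarrow> 'd) \<times> ('p \<Rightarrow> unit \<Rightarrow> 'e), 'p \<times> unit, 'd) bicomod" where
  "dual C D m = ihom C m (bot C D)"

definition mor :: "'c set \<Rightarrow> ('c, 'p, 'e, 'd) bicomod \<Rightarrow> ('c, 'q, 'f, 'd) bicomod
     \<Rightarrow> ('c \<Rightarrow> ('p \<Rightarrow> 'q) \<times> ('p \<Rightarrow> 'f \<Rightarrow> 'e)) \<Rightarrow> bool" where
  "mor C m n F \<longleftrightarrow> (\<forall>a\<in>C. F a \<in> natD m n a)"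

definition eqm :: "'c set \<Rightarrow> ('c \<Rightarrow> 'x) \<Rightarrow> ('c \<Rightarrow> 'x) \<Rightarrow> bool" where
  "eqm C F G \<longleftrightarrow> (\<forall>a\<in>C. F a = G a)"

definition idm :: "('c, 'p, 'e, 'd) bicomod \<Rightarrow> 'c \<Rightarrow> ('p \<Rightarrow> 'p) \<times> ('p \<Rightarrow> 'e \<Rightarrow> 'e)" where
  "idm m = (\<lambda>a. (\<lambda>i. if i \<in> pos m a then i else undefined,
                  \<lambda>i. if i \<in> pos m a then (\<lambda>e. if e \<in> dir m a i then e else undefined)
                      else undefined))"

definition compnat :: "('c, 'p, 'e, 'd) bicomod \<Rightarrow> ('c, 'r, 'g, 'd) bicomod \<Rightarrow> 'c
     \<Rightarrow> ('p \<Rightarrow> 'q) \<times> ('p \<Rightarrow> 'f \<Rightarrow> 'e) \<Rightarrow> ('q \<Rightarrow> 'r) \<times> ('q \<Rightarrow> 'g \<Rightarrow> 'f)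
     \<Rightarrow> ('p \<Rightarrow> 'r) \<times> ('p \<Rightarrow> 'g \<Rightarrow> 'e)" where
  "compnat m p a \<psi> \<phi> =
     (\<lambda>i. if i \<in> pos m a then fst \<phi> (fst \<psi> i) else undefined,
      \<lambda>i. if i \<in> pos m a then
             (\<lambda>e. if e \<in> dir p a (fst \<phi> (fst \<psi> i))
                  then snd \<psi> i (snd \<phi> (fst \<psi> i) e) else undefined)
           else undefined)"

definition compm :: "('c, 'p, 'e, 'd) bicomod \<Rightarrow> ('c, 'r, 'g, 'd) bicomod
     \<Rightarrow> ('c \<Rightarrow> ('q \<Rightarrow> 'r) \<times> ('q \<Rightarrow> 'g \<Rightarrow> 'f)) \<Rightarrow> ('c \<Rightarrow> ('p \<Rightarrow> 'q) \<times> ('p \<Rightarrow> 'f \<Rightarrow> 'e))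
     \<Rightarrow> 'c \<Rightarrow> ('p \<Rightarrow> 'r) \<times> ('p \<Rightarrow> 'g \<Rightarrow> 'e)" where
  "compm m p G F = (\<lambda>a. compnat m p a (F a) (G a))"

definition iso_mor :: "'c set \<Rightarrow> ('c, 'p, 'e, 'd) bicomod \<Rightarrow> ('c, 'q, 'f, 'd) bicomod
     \<Rightarrow> ('c \<Rightarrow> ('p \<Rightarrow> 'q) \<times> ('p \<Rightarrow> 'f \<Rightarrow> 'e)) \<Rightarrow> bool" where
  "iso_mor C m n F \<longleftrightarrow> mor C m n F \<and>
     (\<exists>G. mor C n m G \<and> eqm C (compm m m G F) (idm m) \<and> eqm C (compm n n F G) (idm n))"

text \<open>Action of (-)^vee = [-, bot] on a morphism F : m -> n, giving
  [F, bot] : [n, bot] -> [m, bot] (precomposition with F).\<close>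
definition dual_mor :: "'c set \<Rightarrow> 'd set \<Rightarrow> ('c, 'p, 'e, 'd) bicomod \<Rightarrow> ('c, 'q, 'f, 'd) bicomod
     \<Rightarrow> ('c \<Rightarrow> ('p \<Rightarrow> 'q) \<times> ('p \<Rightarrow> 'f \<Rightarrow> 'e))
     \<Rightarrow> 'c \<Rightarrow> ((('q \<Rightarrow> 'd) \<times> ('q \<Rightarrow> unit \<Rightarrow> 'f)) \<Rightarrow> (('p \<Rightarrow> 'd) \<times> ('p \<Rightarrow> unit \<Rightarrow> 'e)))
            \<times> ((('q \<Rightarrow> 'd) \<times> ('q \<Rightarrow> unit \<Rightarrow> 'f)) \<Rightarrow> 'p \<times> unit \<Rightarrow> 'q \<times> unit)" where
  "dual_mor C D m n F = (\<lambda>a.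
     (\<lambda>\<phi>. if \<phi> \<in> pos (dual C D n) a then compnat m (bot C D) a (F a) \<phi> else undefined,
      \<lambda>\<phi>. if \<phi> \<in> pos (dual C D n) a then
             (\<lambda>ie. if ie \<in> dir (dual C D m) a (compnat m (bot C D) a (F a) \<phi>)
                   then (fst (F a) (fst ie), snd ie) else undefined)
           else undefined))"

definition dual_functor :: "'c set \<Rightarrow> 'd set \<Rightarrow> (('c, 'p, 'e, 'd) bicomod \<Rightarrow> bool)
     \<Rightarrow> (('c, ('p \<Rightarrow> 'd) \<times> ('p \<Rightarrow> unit \<Rightarrow> 'e), 'p \<times> unit, 'd) bicomod \<Rightarrow> bool) \<Rightarrow> bool" where
  "dual_functor C D P Q \<longleftrightarrow>
     (\<forall>m. P m \<longrightarrow> Q (dual C D m)) \<and>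
     (\<forall>m n F. P m \<longrightarrow> P n \<longrightarrow> mor C m n F \<longrightarrow>
        mor C (dual C D n) (dual C D m) (dual_mor C D m n F)) \<and>
     (\<forall>m. P m \<longrightarrow> eqm C (dual_mor C D m m (idm m)) (idm (dual C D m))) \<and>
     (\<forall>m n p F G. P m \<longrightarrow> P n \<longrightarrow> P p \<longrightarrow> mor C m n F \<longrightarrow> mor C n p G \<longrightarrow>
        eqm C (dual_mor C D m p (compm m p G F))
              (compm (dual C D p) (dual C D m) (dual_mor C D m n F) (dual_mor C D n p G)))"

definition dual_unit_iso :: "'c set \<Rightarrow> 'd set \<Rightarrow> (('c, 'p, 'e, 'd) bicomod \<Rightarrow> bool) \<Rightarrow> bool" where
  "dual_unit_iso C D P \<longleftrightarrow>
     (\<exists>\<eta>. (\<forall>m. P m \<longrightarrow> iso_mor C m (dual C D (dual C D m)) (\<eta> m)) \<and>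
          (\<forall>m n F. P m \<longrightarrow> P n \<longrightarrow> mor C m n F \<longrightarrow>
             eqm C (compm m (dual C D (dual C D n)) (\<eta> n) F)
                   (compm m (dual C D (dual C D n))
                      (dual_mor C D (dual C D n) (dual C D m) (dual_mor C D m n F)) (\<eta> m))))"

text \<open>The bicomodules of a span C <- M -> D (legs s, t):
  linear  sum_a M_a y   and conjunctive  sum_a y^(M_a).\<close>
definition lin_of :: "'m set \<Rightarrow> ('m \<Rightarrow> 'c) \<Rightarrow> ('m \<Rightarrow> 'd) \<Rightarrow> ('c, 'm, unit, 'd) bicomod" where
  "lin_of M s t = \<lparr> pos = (\<lambda>a. {x \<in> M. s x = a}),
                    dir = (\<lambda>a x. {()}),
                    lab = (\<lambda>a x u. t x) \<rparr>"

definition conj_of :: "'c set \<Rightarrow> 'm set \<Rightarrow> ('m \<Rightarrow> 'c) \<Rightarrow> ('m \<Rightarrow> 'd) \<Rightarrow> ('c, unit, 'm, 'd) bicomod" where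
  "conj_of C M s t = \<lparr> pos = (\<lambda>a. if a \<in> C then {()} else {}),
                       dir = (\<lambda>a u. {x \<in> M. s x = a}),
                       lab = (\<lambda>a u x. t x) \<rparr>"

end

theory Submission
  imports Defs
begin


lemma natD_iff: "(f,g) \<in> natD q r a \<longleftrightarrow>
      (\<forall>i\<in>pos q a. f i \<in> pos r a \<and>
          (\<forall>e\<in>dir r a (f i). g i e \<in> dir q a i \<and> lab q a i (g i e) = lab r a (f i) e)) \<and>
      (\<forall>i. i \<notin> pos q a \<longrightarrow> f i = undefined \<and> g i = undefined) \<and>
      (\<forall>i\<in>pos q a. \<forall>e. e \<notin> dir r a (f i) \<longrightarrow> g i e = undefined)"
  by (simp add: natD_def)

lemma natD_inverse:
  assumes F: "F \<in> natD m n a" and b1: "bij_betw (fst F) (pos m a) (pos n a)"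
    and b2: "\<forall>i\<in>pos m a. bij_betw (snd F i) (dir n a (fst F i)) (dir m a i)"
  shows "\<exists>G\<in>natD n m a. compnat m m a F G = idm m a \<and> compnat n n a G F = idm n a"
proof -
  obtain f g where Fe: "F = (f,g)" by (cases F)
  have Fn: "(f,g) \<in> natD m n a" using F Fe by simp
  note FF = Fn[unfolded natD_iff]
  have b1': "bij_betw f (pos m a) (pos n a)" using b1 Fe by simp
  have b2': "\<And>i. i\<in>pos m a \<Longrightarrow> bij_betw (g i) (dir n a (f i)) (dir m a i)" using b2 Fe by simp
  define f' where "f' = (\<lambda>j. if j \<in> pos n a then inv_into (pos m a) f j else undefined)"
  define g' where "g' = (\<lambda>j. if j \<in> pos n a then (\<lambda>e. if e \<in> dir m a (f' j) then inv_into (dir n a j) (g (f' j)) e else undefined) else undefined)"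
  have f'p: "\<And>j. j \<in> pos n a \<Longrightarrow> f' j \<in> pos m a \<and> f (f' j) = j"
    using b1' unfolding f'_def bij_betw_def
    by (auto intro: inv_into_into f_inv_into_f)
  have f'f: "\<And>i. i \<in> pos m a \<Longrightarrow> f' (f i) = i"
    using b1' unfolding f'_def bij_betw_def
    by (auto intro: inv_into_f_f)
  have g'p: "\<And>j e. j \<in> pos n a \<Longrightarrow> e \<in> dir m a (f' j) \<Longrightarrow> g' j e \<in> dir n a j \<and> g (f' j) (g' j e) = e"
  proof -
    fix j e assume j: "j \<in> pos n a" and e: "e \<in> dir m a (f' j)"
    have bb: "bij_betw (g (f' j)) (dir n a j) (dir m a (f' j))"
      using b2'[of "f' j"] f'p[OF j] by simp
    show "g' j e \<in> dir n a j \<and> g (f' j) (g' j e) = e"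
      using bb e j unfolding g'_def bij_betw_def
      by (auto intro: inv_into_into f_inv_into_f)
  qed
  have g'g: "\<And>i e. i \<in> pos m a \<Longrightarrow> e \<in> dir n a (f i) \<Longrightarrow> g' (f i) (g i e) = e"
  proof -
    fix i e assume i: "i \<in> pos m a" and e: "e \<in> dir n a (f i)"
    have bb: "bij_betw (g i) (dir n a (f i)) (dir m a i)" using b2' i by simp
    have "g i e \<in> dir m a i" using bb e by (auto simp: bij_betw_def)
    then show "g' (f i) (g i e) = e"
      using bb e i f'f[OF i] FF unfolding g'_def bij_betw_def
      by (auto intro: inv_into_f_f)
  qed
  have Gn: "(f',g') \<in> natD n m a"
    unfolding natD_iff
  proof (intro conjI ballI allI impI)
    fix j assume j: "j \<in> pos n a"
    show "f' j \<in> pos m a" using f'p[OF j] by simp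
    fix e assume e: "e \<in> dir m a (f' j)"
    show "g' j e \<in> dir n a j" using g'p[OF j e] by simp
    have "lab m a (f' j) (g (f' j) (g' j e)) = lab n a (f (f' j)) (g' j e)"
    proof -
      have "f' j \<in> pos m a" "g' j e \<in> dir n a (f (f' j))" using f'p[OF j] g'p[OF j e] by auto
      then show ?thesis using FF by blast
    qed
    then show "lab n a j (g' j e) = lab m a (f' j) e" using f'p[OF j] g'p[OF j e] by simp
  qed (auto simp add: f'_def g'_def)
  have gg': "\<And>i x. i \<in> pos m a \<Longrightarrow> x \<in> dir m a i \<Longrightarrow> g i (g' (f i) x) = x"
  proof -
    fix i x assume i: "i \<in> pos m a" and x: "x \<in> dir m a i"
    have "f i \<in> pos n a" using FF i by blast
    then show "g i (g' (f i) x) = x" using g'p[of "f i" x] f'f[OF i] x by simp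
  qed
  have c1: "compnat m m a F (f',g') = idm m a"
    unfolding Fe compnat_def idm_def
    using f'f g'g FF gg' f'p by (auto intro!: ext)
  have g'g2: "\<And>j x. j \<in> pos n a \<Longrightarrow> x \<in> dir n a j \<Longrightarrow> g' j (g (f' j) x) = x"
  proof -
    fix j x assume j: "j \<in> pos n a" and x: "x \<in> dir n a j"
    show "g' j (g (f' j) x) = x" using g'g[of "f' j" x] f'p[OF j] x by simp
  qed
  have c2: "compnat n n a (f',g') F = idm n a"
    unfolding Fe compnat_def idm_def
    using f'p g'p g'g2 FF Gn[unfolded natD_iff] by (auto intro!: ext)
  show ?thesis using Gn c1 c2 by blast
qed

lemma iso_from_bij:
  assumes "mor C m n F"
    and "\<And>a. a\<in>C \<Longrightarrow> bij_betw (fst (F a)) (pos m a) (pos n a) \<and>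
            (\<forall>i\<in>pos m a. bij_betw (snd (F a) i) (dir n a (fst (F a) i)) (dir m a i))"
  shows "iso_mor C m n F"
proof -
  have "\<forall>a\<in>C. \<exists>G. G \<in> natD n m a \<and> compnat m m a (F a) G = idm m a \<and> compnat n n a G (F a) = idm n a"
  proof
    fix a assume a: "a \<in> C"
    have Fa: "F a \<in> natD m n a" using assms(1) a by (simp add: mor_def)
    show "\<exists>G. G \<in> natD n m a \<and> compnat m m a (F a) G = idm m a \<and> compnat n n a G (F a) = idm n a"
      using natD_inverse[OF Fa] assms(2)[OF a] by blast
  qed
  then obtain G where G: "\<forall>a\<in>C. G a \<in> natD n m a \<and> compnat m m a (F a) (G a) = idm m a \<and> compnat n n a (G a) (F a) = idm n a"
    by (rule bchoice[elim_format]) blast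
  have "mor C n m G" using G by (simp add: mor_def)
  moreover have "eqm C (compm m m G F) (idm m)" using G by (simp add: eqm_def compm_def)
  moreover have "eqm C (compm n n F G) (idm n)" using G by (simp add: eqm_def compm_def)
  ultimately show ?thesis unfolding iso_mor_def using assms(1) by blast
qed

lemma pos_dual: "pos (dual C D m) a = (if a \<in> C then natD m (bot C D) a else {})"
  by (simp add: dual_def ihom_def)
lemma dir_dual: "dir (dual C D m) a \<phi> = {(i,u). i \<in> pos m a}"
  by (simp add: dual_def ihom_def bot_def)
lemma lab_dual: "lab (dual C D m) a \<phi> x = fst \<phi> (fst x)"
  by (simp add: dual_def ihom_def bot_def)

lemma natD_bot: "a \<in> C \<Longrightarrow> (\<phi> \<in> natD m (bot C D) a) = ((\<forall>i\<in>pos m a. fst \<phi> i \<in> D \<and> snd \<phi> i () \<in> dir m a i \<and> lab m a i (snd \<phi> i ()) = fst \<phi> i) \<and> (\<forall>i. i \<notin> pos m a \<longrightarrow> fst \<phi> i = undefined \<and> snd \<phi> i = undefined))"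
  by (cases \<phi>) (auto simp: natD_def bot_def)



lemma compnat_natD:
  assumes "\<psi> \<in> natD m n a" "\<phi> \<in> natD n p a"
  shows "compnat m p a \<psi> \<phi> \<in> natD m p a"
proof -
  obtain f1 g1 where p1: "\<psi> = (f1,g1)" by (cases \<psi>)
  obtain f2 g2 where p2: "\<phi> = (f2,g2)" by (cases \<phi>)
  have A1: "(f1,g1) \<in> natD m n a" and A2: "(f2,g2) \<in> natD n p a" using assms p1 p2 by auto
  note N1 = A1[unfolded natD_iff] and N2 = A2[unfolded natD_iff]
  show ?thesis unfolding p1 p2 compnat_def natD_iff
  proof (intro conjI ballI allI impI)
    fix i assume i: "i \<in> pos m a"
    have fi: "f1 i \<in> pos n a" using N1 i by blast
    show "(if i \<in> pos m a then fst (f2, g2) (fst (f1, g1) i) else undefined) \<in> pos p a"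
      using i fi N2 by simp
    fix e assume e: "e \<in> dir p a ((if i \<in> pos m a then fst (f2, g2) (fst (f1, g1) i) else undefined))"
    have e': "e \<in> dir p a (f2 (f1 i))" using e i by simp
    have h2: "g2 (f1 i) e \<in> dir n a (f1 i)" "lab n a (f1 i) (g2 (f1 i) e) = lab p a (f2 (f1 i)) e"
      using N2 fi e' by blast+
    have h1: "g1 i (g2 (f1 i) e) \<in> dir m a i" "lab m a i (g1 i (g2 (f1 i) e)) = lab n a (f1 i) (g2 (f1 i) e)"
      using N1 i h2(1) by blast+
    show "(if i \<in> pos m a then \<lambda>e. if e \<in> dir p a (fst (f2, g2) (fst (f1, g1) i)) then snd (f1, g1) i (snd (f2, g2) (fst (f1, g1) i) e) else undefined else undefined) e \<in> dir m a i"
      using i e' h1 by simp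
    show "lab m a i ((if i \<in> pos m a then \<lambda>e. if e \<in> dir p a (fst (f2, g2) (fst (f1, g1) i)) then snd (f1, g1) i (snd (f2, g2) (fst (f1, g1) i) e) else undefined else undefined) e) =
       lab p a (if i \<in> pos m a then fst (f2, g2) (fst (f1, g1) i) else undefined) e"
      using i e' h1 h2 by simp
  qed auto
qed

lemma compnat_assoc:
  assumes "\<psi> \<in> natD m n a" "\<chi> \<in> natD n p a" "\<phi> \<in> natD p r a"
  shows "compnat m r a (compnat m p a \<psi> \<chi>) \<phi> = compnat m r a \<psi> (compnat n r a \<chi> \<phi>)"
proof -
  obtain f1 g1 where p1: "\<psi> = (f1,g1)" by (cases \<psi>)
  obtain f2 g2 where p2: "\<chi> = (f2,g2)" by (cases \<chi>)
  obtain f3 g3 where p3: "\<phi> = (f3,g3)" by (cases \<phi>)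
  have A1: "(f1,g1) \<in> natD m n a" and A2: "(f2,g2) \<in> natD n p a" and A3: "(f3,g3) \<in> natD p r a"
    using assms p1 p2 p3 by auto
  note N1 = A1[unfolded natD_iff] and N2 = A2[unfolded natD_iff] and N3 = A3[unfolded natD_iff]
  have fi: "\<And>i. i \<in> pos m a \<Longrightarrow> f1 i \<in> pos n a" using N1 by blast
  have ge: "\<And>i e. i \<in> pos m a \<Longrightarrow> e \<in> dir r a (f3 (f2 (f1 i))) \<Longrightarrow> g3 (f2 (f1 i)) e \<in> dir p a (f2 (f1 i))"
    using N3 N2 fi by blast
  show ?thesis unfolding p1 p2 p3 compnat_def
    using fi ge by (auto intro!: ext)
qed

lemma dual_mor_mor:
  assumes "mor C m n F"
  shows "mor C (dual C D n) (dual C D m) (dual_mor C D m n F)"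
  unfolding mor_def
proof
  fix a assume a: "a \<in> C"
  have Fa: "F a \<in> natD m n a" using assms a by (simp add: mor_def)
  show "dual_mor C D m n F a \<in> natD (dual C D n) (dual C D m) a"
    unfolding dual_mor_def natD_iff
  proof (intro conjI ballI allI impI)
    fix \<phi> assume \<phi>: "\<phi> \<in> pos (dual C D n) a"
    then have \<phi>': "\<phi> \<in> natD n (bot C D) a" using a by (simp add: pos_dual)
    show "(if \<phi> \<in> pos (dual C D n) a then compnat m (bot C D) a (F a) \<phi> else undefined) \<in> pos (dual C D m) a"
      using \<phi> \<phi>' a compnat_natD[OF Fa \<phi>'] by (simp add: pos_dual)
    fix e assume e: "e \<in> dir (dual C D m) a (if \<phi> \<in> pos (dual C D n) a then compnat m (bot C D) a (F a) \<phi> else undefined)"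
    have "fst (F a) (fst e) \<in> pos n a" using e Fa by (cases "F a") (auto simp: dir_dual natD_def)
    then show "(if \<phi> \<in> pos (dual C D n) a then \<lambda>ie. if ie \<in> dir (dual C D m) a (compnat m (bot C D) a (F a) \<phi>) then (fst (F a) (fst ie), snd ie) else undefined else undefined) e \<in> dir (dual C D n) a \<phi>"
      using \<phi> e by (auto simp: dir_dual)
    show "lab (dual C D n) a \<phi> ((if \<phi> \<in> pos (dual C D n) a then \<lambda>ie. if ie \<in> dir (dual C D m) a (compnat m (bot C D) a (F a) \<phi>) then (fst (F a) (fst ie), snd ie) else undefined else undefined) e) =
          lab (dual C D m) a (if \<phi> \<in> pos (dual C D n) a then compnat m (bot C D) a (F a) \<phi> else undefined) e"
      using \<phi> e by (auto simp: dir_dual lab_dual compnat_def)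
  qed (auto simp: dir_dual)
qed


lemma compnat_idm_left:
  assumes "\<phi> \<in> natD m p a"
  shows "compnat m p a (idm m a) \<phi> = \<phi>"
proof -
  obtain f g where p: "\<phi> = (f,g)" by (cases \<phi>)
  have N: "(f,g) \<in> natD m p a" using assms p by simp
  note NN = N[unfolded natD_iff]
  show ?thesis unfolding p compnat_def idm_def
    using NN by (auto intro!: ext)
qed

lemma dual_mor_id:
  "eqm C (dual_mor C D m m (idm m)) (idm (dual C D m))"
  unfolding eqm_def
proof
  fix a assume a: "a \<in> C"
  show "dual_mor C D m m (idm m) a = idm (dual C D m) a"
    unfolding dual_mor_def idm_def[of "dual C D m"]
    using a compnat_idm_left[of _ m "bot C D" a]
    by (auto intro!: ext simp: pos_dual dir_dual idm_def)
qed

lemma dual_mor_comp: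
  assumes F: "mor C m n F" and G: "mor C n p G"
  shows "eqm C (dual_mor C D m p (compm m p G F))
              (compm (dual C D p) (dual C D m) (dual_mor C D m n F) (dual_mor C D n p G))"
  unfolding eqm_def
proof
  fix a assume a: "a \<in> C"
  have Fa: "F a \<in> natD m n a" using F a by (simp add: mor_def)
  have Ga: "G a \<in> natD n p a" using G a by (simp add: mor_def)
  have fF: "\<And>i. i \<in> pos m a \<Longrightarrow> fst (F a) i \<in> pos n a" using Fa by (cases "F a") (auto simp: natD_def)
  have ass: "\<And>\<phi>. \<phi> \<in> natD p (bot C D) a \<Longrightarrow> compnat m (bot C D) a (compnat m p a (F a) (G a)) \<phi> = compnat m (bot C D) a (F a) (compnat n (bot C D) a (G a) \<phi>)"
    using compnat_assoc[OF Fa Ga] by blast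
  have cl: "\<And>\<phi>. \<phi> \<in> natD p (bot C D) a \<Longrightarrow> compnat n (bot C D) a (G a) \<phi> \<in> natD n (bot C D) a"
    using compnat_natD[OF Ga] by blast
  have fc: "\<And>i. i \<in> pos m a \<Longrightarrow> fst (compnat m p a (F a) (G a)) i = fst (G a) (fst (F a) i)"
    by (simp add: compnat_def)
  show "dual_mor C D m p (compm m p G F) a = compm (dual C D p) (dual C D m) (dual_mor C D m n F) (dual_mor C D n p G) a"
    unfolding dual_mor_def compm_def compnat_def[of "dual C D p"]
    using a ass cl fc fF
    by (auto intro!: ext simp: pos_dual dir_dual)
qed

lemma wf_dual: "wf_bicomod C D (dual C D m)"
  unfolding wf_bicomod_def
  by (auto simp: pos_dual dir_dual lab_dual natD_bot)

lemma lin_dual: "conj_bicomod C D m \<Longrightarrow> lin_bicomod C D (dual C D m)"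
  unfolding lin_bicomod_def conj_bicomod_def
  using wf_dual[of C D m]
  by (auto simp: dir_dual) blast

lemma conj_dual: assumes "lin_bicomod C D m" shows "conj_bicomod C D (dual C D m)"
  unfolding conj_bicomod_def
proof (intro conjI ballI wf_dual)
  fix a assume a: "a \<in> C"
  have wf: "\<And>i e. i \<in> pos m a \<Longrightarrow> e \<in> dir m a i \<Longrightarrow> lab m a i e \<in> D"
    using assms a unfolding lin_bicomod_def wf_bicomod_def by blast
  have u: "\<And>i. i \<in> pos m a \<Longrightarrow> \<exists>!e. e \<in> dir m a i"
    using assms a unfolding lin_bicomod_def by blast
  define \<phi>0 where "\<phi>0 = ((\<lambda>i. if i \<in> pos m a then lab m a i (THE e. e \<in> dir m a i) else undefined),
     (\<lambda>i. if i \<in> pos m a then (\<lambda>u::unit. THE e. e \<in> dir m a i) else undefined))"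
  have T: "\<And>i. i \<in> pos m a \<Longrightarrow> (THE e. e \<in> dir m a i) \<in> dir m a i"
    using u theI' by metis
  have ex: "\<phi>0 \<in> pos (dual C D m) a"
    using a T wf by (auto simp: pos_dual natD_bot \<phi>0_def)
  have un: "\<And>\<psi>. \<psi> \<in> pos (dual C D m) a \<Longrightarrow> \<psi> = \<phi>0"
  proof -
    fix \<psi> assume "\<psi> \<in> pos (dual C D m) a"
    then have N: "\<psi> \<in> natD m (bot C D) a" using a by (simp add: pos_dual)
    note NN = N[unfolded natD_bot[OF a]]
    have s: "\<And>i. i \<in> pos m a \<Longrightarrow> snd \<psi> i () = (THE e. e \<in> dir m a i)"
      using NN u T by blast
    have f1: "fst \<psi> = fst \<phi>0"
      using NN s unfolding \<phi>0_def by (auto intro!: ext)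
    have f2: "snd \<psi> = snd \<phi>0"
      using NN s unfolding \<phi>0_def by (auto intro!: ext)
    show "\<psi> = \<phi>0" using f1 f2 by (simp add: prod_eq_iff)
  qed
  show "\<exists>!i. i \<in> pos (dual C D m) a" using ex un by blast
qed

definition etai where
  "etai C D m a i = ((\<lambda>\<phi>. if \<phi> \<in> pos (dual C D m) a then fst \<phi> i else undefined),
                     (\<lambda>\<phi>. if \<phi> \<in> pos (dual C D m) a then (\<lambda>u::unit. (i,())) else undefined))"

definition etam where
  "etam C D m = (\<lambda>a. ((\<lambda>i. if i \<in> pos m a then etai C D m a i else undefined),
       (\<lambda>i. if i \<in> pos m a then (\<lambda>x. if fst x \<in> pos (dual C D m) a then snd (fst x) i () else undefined) else undefined)))"

lemma bot_dir: "dir (bot C D) a x = {()}" by (simp add: bot_def)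

lemma etai_pos: assumes a: "a \<in> C" and i: "i \<in> pos m a"
  shows "etai C D m a i \<in> pos (dual C D (dual C D m)) a"
  using a i by (auto simp: pos_dual natD_bot etai_def dir_dual lab_dual)

lemma etam_mor: "mor C m (dual C D (dual C D m)) (etam C D m)"
  unfolding mor_def
proof
  fix a assume a: "a \<in> C"
  show "etam C D m a \<in> natD m (dual C D (dual C D m)) a"
    unfolding natD_iff etam_def
    using a etai_pos[OF a]
    by (auto simp: dir_dual lab_dual etai_def pos_dual natD_bot)
qed

lemma etam_natural:
  assumes F: "mor C m n F"
  shows "eqm C (compm m (dual C D (dual C D n)) (etam C D n) F)
               (compm m (dual C D (dual C D n))
                  (dual_mor C D (dual C D n) (dual C D m) (dual_mor C D m n F)) (etam C D m))"
  unfolding eqm_def compm_def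
proof
  fix a assume a: "a \<in> C"
  have Fa: "F a \<in> natD m n a" using F a by (simp add: mor_def)
  have fF: "\<And>i. i \<in> pos m a \<Longrightarrow> fst (F a) i \<in> pos n a" using Fa by (cases "F a") (auto simp: natD_def)
  have cl: "\<And>\<phi>. \<phi> \<in> natD n (bot C D) a \<Longrightarrow> compnat m (bot C D) a (F a) \<phi> \<in> natD m (bot C D) a"
    using compnat_natD[OF Fa] by blast
  have ep: "\<And>i. i \<in> pos m a \<Longrightarrow> etai C D m a i \<in> natD (dual C D m) (bot C D) a"
    using etai_pos[OF a] a by (simp add: pos_dual)
  have cf: "\<And>\<phi> i. i \<in> pos m a \<Longrightarrow> fst (compnat m (bot C D) a (F a) \<phi>) i = fst \<phi> (fst (F a) i)"
    by (simp add: compnat_def)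
  have cs: "\<And>\<phi> i. i \<in> pos m a \<Longrightarrow> snd (compnat m (bot C D) a (F a) \<phi>) i () = snd (F a) i (snd \<phi> (fst (F a) i) ())"
    by (simp add: compnat_def bot_def)
  have cs': "\<And>\<phi> i u. i \<in> pos m a \<Longrightarrow> snd (compnat m (bot C D) a (F a) \<phi>) i u = snd (F a) i (snd \<phi> (fst (F a) i) ())"
    using cs by (metis (full_types) old.unit.exhaust)
  have key1: "\<And>i. i \<in> pos m a \<Longrightarrow> etai C D n a (fst (F a) i) =
      compnat (dual C D n) (bot C D) a (dual_mor C D m n F a) (etai C D m a i)"
  proof -
    fix i assume i: "i \<in> pos m a"
    show "etai C D n a (fst (F a) i) = compnat (dual C D n) (bot C D) a (dual_mor C D m n F a) (etai C D m a i)"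
      unfolding compnat_def[of "dual C D n"] etai_def dual_mor_def
      using a i cl cf cs' by (auto intro!: ext simp: pos_dual dir_dual bot_dir)
  qed
  have ep2: "\<And>i. i \<in> pos m a \<Longrightarrow> etai C D m a i \<in> pos (dual C D (dual C D m)) a"
    by (rule etai_pos[OF a])
  show "compnat m (dual C D (dual C D n)) a (F a) (etam C D n a) =
        compnat m (dual C D (dual C D n)) a (etam C D m a) (dual_mor C D (dual C D n) (dual C D m) (dual_mor C D m n F) a)"
  proof (rule prod_eqI)
    show "fst (compnat m (dual C D (dual C D n)) a (F a) (etam C D n a)) =
        fst (compnat m (dual C D (dual C D n)) a (etam C D m a) (dual_mor C D (dual C D n) (dual C D m) (dual_mor C D m n F) a))"
      unfolding compnat_def[of m] etam_def dual_mor_def[of C D "dual C D n"]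
      using key1 fF ep2 by (auto intro!: ext)
    show "snd (compnat m (dual C D (dual C D n)) a (F a) (etam C D n a)) =
        snd (compnat m (dual C D (dual C D n)) a (etam C D m a) (dual_mor C D (dual C D n) (dual C D m) (dual_mor C D m n F) a))"
      unfolding compnat_def[of m] etam_def dual_mor_def[of C D "dual C D n"]
      using key1 fF ep2 a cl cs'
      by (auto intro!: ext simp: dir_dual pos_dual dual_mor_def)
  qed
qed

lemma unit_fun_eq: "(f::unit \<Rightarrow> 'x) () = g () \<Longrightarrow> f = g"
  by (rule ext) (metis (full_types) old.unit.exhaust)

lemma dual_pos_eq:
  assumes a: "a \<in> C" and p: "\<phi> \<in> pos (dual C D m) a" "\<psi> \<in> pos (dual C D m) a"
    and e: "\<forall>i\<in>pos m a. snd \<phi> i () = snd \<psi> i ()"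
  shows "\<phi> = \<psi>"
proof -
  have N1: "\<phi> \<in> natD m (bot C D) a" and N2: "\<psi> \<in> natD m (bot C D) a" using a p by (auto simp: pos_dual)
  note M1 = N1[unfolded natD_bot[OF a]] and M2 = N2[unfolded natD_bot[OF a]]
  have "fst \<phi> = fst \<psi>"
  proof
    fix i show "fst \<phi> i = fst \<psi> i" using M1 M2 e by (cases "i \<in> pos m a") auto
  qed
  moreover have "snd \<phi> = snd \<psi>"
  proof
    fix i show "snd \<phi> i = snd \<psi> i" using M1 M2 e unit_fun_eq by (cases "i \<in> pos m a") auto
  qed
  ultimately show ?thesis by (simp add: prod_eq_iff)
qed

lemma ddpos_eta:
  assumes a: "a \<in> C" and P: "\<Phi> \<in> pos (dual C D (dual C D m)) a" and i: "i \<in> pos m a"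
    and h: "\<forall>\<phi>\<in>pos (dual C D m) a. fst (snd \<Phi> \<phi> ()) = i"
  shows "\<Phi> = etai C D m a i"
proof -
  have N: "\<Phi> \<in> natD (dual C D m) (bot C D) a" using a P by (simp add: pos_dual)
  note M = N[unfolded natD_bot[OF a]]
  have "fst \<Phi> = fst (etai C D m a i)"
  proof
    fix \<phi> show "fst \<Phi> \<phi> = fst (etai C D m a i) \<phi>"
      using M h by (cases "\<phi> \<in> pos (dual C D m) a") (auto simp: etai_def lab_dual, metis prod.collapse)
  qed
  moreover have "snd \<Phi> = snd (etai C D m a i)"
  proof
    fix \<phi> show "snd \<Phi> \<phi> = snd (etai C D m a i) \<phi>"
    proof (cases "\<phi> \<in> pos (dual C D m) a")
      case True
      then have "snd \<Phi> \<phi> () = (i, ())" using h by (metis (full_types) old.unit.exhaust prod.collapse)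
      then show ?thesis using True by (auto simp: etai_def intro: unit_fun_eq)
    next
      case False then show ?thesis using M by (auto simp: etai_def, metis prod.collapse)
    qed
  qed
  ultimately show ?thesis by (simp add: prod_eq_iff)
qed

lemma etam_iso_conj:
  assumes cm: "conj_bicomod C D m"
  shows "iso_mor C m (dual C D (dual C D m)) (etam C D m)"
proof (rule iso_from_bij[OF etam_mor])
  fix a assume a: "a \<in> C"
  obtain i0 where i0: "i0 \<in> pos m a" and u0: "\<And>j. j \<in> pos m a \<Longrightarrow> j = i0"
    using cm a unfolding conj_bicomod_def by blast
  have wf: "\<And>i e. i \<in> pos m a \<Longrightarrow> e \<in> dir m a i \<Longrightarrow> lab m a i e \<in> D"
    using cm a unfolding conj_bicomod_def wf_bicomod_def by blast
  have pm: "pos m a = {i0}" using i0 u0 by blast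
  have ddp: "pos (dual C D (dual C D m)) a = {etai C D m a i0}"
  proof
    show "{etai C D m a i0} \<subseteq> pos (dual C D (dual C D m)) a" using etai_pos[OF a i0] by simp
    show "pos (dual C D (dual C D m)) a \<subseteq> {etai C D m a i0}"
    proof
      fix \<Phi> assume P: "\<Phi> \<in> pos (dual C D (dual C D m)) a"
      have N: "\<Phi> \<in> natD (dual C D m) (bot C D) a" using a P by (simp add: pos_dual)
      note M = N[unfolded natD_bot[OF a]]
      have "\<forall>\<phi>\<in>pos (dual C D m) a. fst (snd \<Phi> \<phi> ()) = i0"
        using M u0 by (auto simp: dir_dual)
      then show "\<Phi> \<in> {etai C D m a i0}" using ddpos_eta[OF a P i0] by simp
    qed
  qed
  have b1: "bij_betw (fst (etam C D m a)) (pos m a) (pos (dual C D (dual C D m)) a)"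
    unfolding pm ddp etam_def by (simp add: bij_betw_def)
  have b2: "bij_betw (snd (etam C D m a) i0) (dir (dual C D (dual C D m)) a (fst (etam C D m a) i0)) (dir m a i0)"
    unfolding bij_betw_def
  proof
    show "inj_on (snd (etam C D m a) i0) (dir (dual C D (dual C D m)) a (fst (etam C D m a) i0))"
    proof (rule inj_onI)
      fix x y assume x: "x \<in> dir (dual C D (dual C D m)) a (fst (etam C D m a) i0)"
        and y: "y \<in> dir (dual C D (dual C D m)) a (fst (etam C D m a) i0)"
        and xy: "snd (etam C D m a) i0 x = snd (etam C D m a) i0 y"
      have xp: "fst x \<in> pos (dual C D m) a" and yp: "fst y \<in> pos (dual C D m) a" using x y by (auto simp: dir_dual)
      have "snd (fst x) i0 () = snd (fst y) i0 ()" using xy xp yp i0 by (simp add: etam_def)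
      then have "fst x = fst y" using dual_pos_eq[OF a xp yp] pm by simp
      then show "x = y" by (simp add: prod_eq_iff)
    qed
    show "snd (etam C D m a) i0 ` dir (dual C D (dual C D m)) a (fst (etam C D m a) i0) = dir m a i0"
    proof
      show "snd (etam C D m a) i0 ` dir (dual C D (dual C D m)) a (fst (etam C D m a) i0) \<subseteq> dir m a i0"
        using a i0 by (auto simp: dir_dual etam_def pos_dual natD_bot)
      show "dir m a i0 \<subseteq> snd (etam C D m a) i0 ` dir (dual C D (dual C D m)) a (fst (etam C D m a) i0)"
      proof
        fix e assume e: "e \<in> dir m a i0"
        define \<phi> where "\<phi> = ((\<lambda>i. if i \<in> pos m a then lab m a i e else undefined),
                             (\<lambda>i. if i \<in> pos m a then (\<lambda>u::unit. e) else undefined))"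
        have \<phi>p: "\<phi> \<in> pos (dual C D m) a"
          using a e wf pm by (auto simp: pos_dual natD_bot \<phi>_def)
        have "snd (etam C D m a) i0 (\<phi>, ()) = e" using \<phi>p i0 by (simp add: etam_def \<phi>_def)
        moreover have "(\<phi>, ()) \<in> dir (dual C D (dual C D m)) a (fst (etam C D m a) i0)"
          using \<phi>p by (simp add: dir_dual)
        ultimately show "e \<in> snd (etam C D m a) i0 ` dir (dual C D (dual C D m)) a (fst (etam C D m a) i0)"
          by (metis image_eqI)
      qed
    qed
  qed
  show "bij_betw (fst (etam C D m a)) (pos m a) (pos (dual C D (dual C D m)) a) \<and>
        (\<forall>i\<in>pos m a. bij_betw (snd (etam C D m a) i) (dir (dual C D (dual C D m)) a (fst (etam C D m a) i)) (dir m a i))"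
    using b1 b2 pm by simp
qed

lemma etam_iso_lin:
  assumes lm: "lin_bicomod C D m"
  shows "iso_mor C m (dual C D (dual C D m)) (etam C D m)"
proof (rule iso_from_bij[OF etam_mor])
  fix a assume a: "a \<in> C"
  obtain \<phi>0 where p0: "\<phi>0 \<in> pos (dual C D m) a" and u0: "\<And>\<psi>. \<psi> \<in> pos (dual C D m) a \<Longrightarrow> \<psi> = \<phi>0"
    using conj_dual[OF lm] a unfolding conj_bicomod_def by blast
  have pd: "pos (dual C D m) a = {\<phi>0}" using p0 u0 by blast
  have N0: "\<phi>0 \<in> natD m (bot C D) a" using a p0 by (simp add: pos_dual)
  note M0 = N0[unfolded natD_bot[OF a]]
  have ue: "\<And>i. i \<in> pos m a \<Longrightarrow> \<exists>!e. e \<in> dir m a i"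
    using lm a unfolding lin_bicomod_def by blast
  have dm: "\<And>i. i \<in> pos m a \<Longrightarrow> dir m a i = {snd \<phi>0 i ()}"
  proof -
    fix i assume i: "i \<in> pos m a"
    have "snd \<phi>0 i () \<in> dir m a i" using M0 i by blast
    then show "dir m a i = {snd \<phi>0 i ()}" using ue[OF i] by blast
  qed
  have b1: "bij_betw (fst (etam C D m a)) (pos m a) (pos (dual C D (dual C D m)) a)"
    unfolding bij_betw_def
  proof
    show "inj_on (fst (etam C D m a)) (pos m a)"
    proof (rule inj_onI)
      fix i j assume i: "i \<in> pos m a" and j: "j \<in> pos m a" and e: "fst (etam C D m a) i = fst (etam C D m a) j"
      then have "etai C D m a i = etai C D m a j" by (simp add: etam_def)
      then have "snd (etai C D m a i) \<phi>0 () = snd (etai C D m a j) \<phi>0 ()" by simp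
      then show "i = j" using p0 by (simp add: etai_def)
    qed
    show "fst (etam C D m a) ` pos m a = pos (dual C D (dual C D m)) a"
    proof
      show "fst (etam C D m a) ` pos m a \<subseteq> pos (dual C D (dual C D m)) a"
        using etai_pos[OF a, of _ m D] by (auto simp: etam_def)
      show "pos (dual C D (dual C D m)) a \<subseteq> fst (etam C D m a) ` pos m a"
      proof
        fix \<Phi> assume P: "\<Phi> \<in> pos (dual C D (dual C D m)) a"
        have N: "\<Phi> \<in> natD (dual C D m) (bot C D) a" using a P by (simp add: pos_dual)
        note M = N[unfolded natD_bot[OF a]]
        define i where "i = fst (snd \<Phi> \<phi>0 ())"
        have "snd \<Phi> \<phi>0 () \<in> dir (dual C D m) a \<phi>0" using M p0 by blast
        then have i: "i \<in> pos m a" unfolding i_def dir_dual by (cases "snd \<Phi> \<phi>0 ()") simp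
        have "\<forall>\<phi>\<in>pos (dual C D m) a. fst (snd \<Phi> \<phi> ()) = i" using u0 unfolding i_def by metis
        then have "\<Phi> = etai C D m a i" using ddpos_eta[OF a P i] by simp
        then have "\<Phi> = fst (etam C D m a) i" using i by (simp add: etam_def)
        then show "\<Phi> \<in> fst (etam C D m a) ` pos m a" using i by blast
      qed
    qed
  qed
  have b2: "\<And>i. i \<in> pos m a \<Longrightarrow> bij_betw (snd (etam C D m a) i) (dir (dual C D (dual C D m)) a (fst (etam C D m a) i)) (dir m a i)"
  proof -
    fix i assume i: "i \<in> pos m a"
    have dd: "dir (dual C D (dual C D m)) a (fst (etam C D m a) i) = {(\<phi>0, ())}"
      unfolding dir_dual pd by auto
    have "snd (etam C D m a) i (\<phi>0, ()) = snd \<phi>0 i ()" using i p0 by (simp add: etam_def)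
    then show "bij_betw (snd (etam C D m a) i) (dir (dual C D (dual C D m)) a (fst (etam C D m a) i)) (dir m a i)"
      unfolding dd dm[OF i] by (simp add: bij_betw_def)
  qed
  show "bij_betw (fst (etam C D m a)) (pos m a) (pos (dual C D (dual C D m)) a) \<and>
        (\<forall>i\<in>pos m a. bij_betw (snd (etam C D m a) i) (dir (dual C D (dual C D m)) a (fst (etam C D m a) i)) (dir m a i))"
    using b1 b2 by blast
qed

lemma lin_of_lin: "s ` M \<subseteq> C \<Longrightarrow> t ` M \<subseteq> D \<Longrightarrow> lin_bicomod C D (lin_of M s t)"
  unfolding lin_bicomod_def wf_bicomod_def lin_of_def by auto

lemma span_iso1:
  assumes sM: "s ` M \<subseteq> C" and tM: "t ` M \<subseteq> D"
  shows "\<exists>F. iso_mor C (dual C D (lin_of M s t)) (conj_of C M s t) F"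
proof -
  let ?L = "lin_of M s t" and ?K = "conj_of C M s t"
  define F where "F = (\<lambda>a. ((\<lambda>\<phi>. if \<phi> \<in> pos (dual C D ?L) a then () else undefined),
      (\<lambda>\<phi>. if \<phi> \<in> pos (dual C D ?L) a then (\<lambda>x. if x \<in> dir ?K a () then (x,()) else undefined) else undefined)))"
  have mF: "mor C (dual C D ?L) ?K F"
    unfolding mor_def
  proof
    fix a assume a: "a \<in> C"
    show "F a \<in> natD (dual C D ?L) ?K a"
      unfolding natD_iff F_def
      using a by (auto simp: conj_of_def lin_of_def dir_dual lab_dual pos_dual natD_bot)
  qed
  have "iso_mor C (dual C D ?L) ?K F"
  proof (rule iso_from_bij[OF mF])
    fix a assume a: "a \<in> C"
    obtain \<phi>0 where p0: "\<phi>0 \<in> pos (dual C D ?L) a" and u0: "\<And>\<psi>. \<psi> \<in> pos (dual C D ?L) a \<Longrightarrow> \<psi> = \<phi>0"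
      using conj_dual[OF lin_of_lin[OF sM tM]] a unfolding conj_bicomod_def by metis
    have pd: "pos (dual C D ?L) a = {\<phi>0}" using p0 u0 by blast
    have pK: "pos ?K a = {()}" using a by (simp add: conj_of_def)
    have b1: "bij_betw (fst (F a)) (pos (dual C D ?L) a) (pos ?K a)"
      unfolding pd pK F_def by (simp add: bij_betw_def)
    have b2: "bij_betw (snd (F a) \<phi>0) (dir ?K a (fst (F a) \<phi>0)) (dir (dual C D ?L) a \<phi>0)"
      unfolding bij_betw_def inj_on_def
      using p0 by (auto simp: F_def dir_dual conj_of_def lin_of_def image_iff)
    show "bij_betw (fst (F a)) (pos (dual C D ?L) a) (pos ?K a) \<and>
      (\<forall>i\<in>pos (dual C D ?L) a. bij_betw (snd (F a) i) (dir ?K a (fst (F a) i)) (dir (dual C D ?L) a i))"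
      using b1 b2 pd by simp
  qed
  then show ?thesis by blast
qed

lemma span_iso2:
  assumes sM: "s ` M \<subseteq> C" and tM: "t ` M \<subseteq> D"
  shows "\<exists>G. iso_mor C (dual C D (conj_of C M s t)) (lin_of M s t) G"
proof -
  let ?L = "lin_of M s t" and ?K = "conj_of C M s t"
  define G where "G = (\<lambda>a. ((\<lambda>\<phi>. if \<phi> \<in> pos (dual C D ?K) a then snd \<phi> () () else undefined),
      (\<lambda>\<phi>. if \<phi> \<in> pos (dual C D ?K) a then (\<lambda>u. if u \<in> dir ?L a (snd \<phi> () ()) then ((),()) else undefined) else undefined)))"
  have mG: "mor C (dual C D ?K) ?L G"
    unfolding mor_def
  proof
    fix a assume a: "a \<in> C"
    show "G a \<in> natD (dual C D ?K) ?L a"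
      unfolding natD_iff G_def
      using a by (auto simp: conj_of_def lin_of_def dir_dual lab_dual pos_dual natD_bot)
  qed
  have "iso_mor C (dual C D ?K) ?L G"
  proof (rule iso_from_bij[OF mG])
    fix a assume a: "a \<in> C"
    have pK: "pos ?K a = {()}" using a by (simp add: conj_of_def)
    have inj: "inj_on (fst (G a)) (pos (dual C D ?K) a)"
    proof (rule inj_onI)
      fix \<phi> \<psi> assume p: "\<phi> \<in> pos (dual C D ?K) a" and q: "\<psi> \<in> pos (dual C D ?K) a"
        and e: "fst (G a) \<phi> = fst (G a) \<psi>"
      have "snd \<phi> () () = snd \<psi> () ()" using e p q by (simp add: G_def)
      then show "\<phi> = \<psi>" using dual_pos_eq[OF a p q] pK by simp
    qed
    have sur: "fst (G a) ` pos (dual C D ?K) a = pos ?L a"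
    proof
      show "fst (G a) ` pos (dual C D ?K) a \<subseteq> pos ?L a"
        using a by (auto simp: G_def pos_dual natD_bot conj_of_def lin_of_def)
      show "pos ?L a \<subseteq> fst (G a) ` pos (dual C D ?K) a"
      proof
        fix x assume x: "x \<in> pos ?L a"
        define \<phi> where "\<phi> = ((\<lambda>u::unit. t x), (\<lambda>u::unit. \<lambda>v::unit. x))"
        have xM: "x \<in> M" "s x = a" using x by (auto simp: lin_of_def)
        have p: "\<phi> \<in> pos (dual C D ?K) a"
          using a xM tM by (auto simp: pos_dual natD_bot conj_of_def \<phi>_def)
        have "fst (G a) \<phi> = x" using p by (simp add: G_def \<phi>_def)
        then show "x \<in> fst (G a) ` pos (dual C D ?K) a" using p by (metis image_eqI)
      qed
    qed
    have b2: "\<And>\<phi>. \<phi> \<in> pos (dual C D ?K) a \<Longrightarrow> bij_betw (snd (G a) \<phi>) (dir ?L a (fst (G a) \<phi>)) (dir (dual C D ?K) a \<phi>)"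
    proof -
      fix \<phi> assume p: "\<phi> \<in> pos (dual C D ?K) a"
      have d1: "dir ?L a (fst (G a) \<phi>) = {()}" by (simp add: lin_of_def)
      have d2: "dir (dual C D ?K) a \<phi> = {((),())}" using pK by (auto simp: dir_dual)
      show "bij_betw (snd (G a) \<phi>) (dir ?L a (fst (G a) \<phi>)) (dir (dual C D ?K) a \<phi>)"
        unfolding d1 d2 using p by (simp add: bij_betw_def G_def lin_of_def)
    qed
    show "bij_betw (fst (G a)) (pos (dual C D ?K) a) (pos ?L a) \<and>
      (\<forall>i\<in>pos (dual C D ?K) a. bij_betw (snd (G a) i) (dir ?L a (fst (G a) i)) (dir (dual C D ?K) a i))"
      using inj sur b2 unfolding bij_betw_def by blast
  qed
  then show ?thesis by blast
qed
theorem theorem2p50: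
  fixes C :: "'c set" and D :: "'d set"
  shows "dual_functor C D (conj_bicomod C D :: ('c, 'p, 'e, 'd) bicomod \<Rightarrow> bool) (lin_bicomod C D)
       \<and> dual_functor C D (lin_bicomod C D :: ('c, 'q, 'f, 'd) bicomod \<Rightarrow> bool) (conj_bicomod C D)
       \<and> dual_unit_iso C D (conj_bicomod C D :: ('c, 'p, 'e, 'd) bicomod \<Rightarrow> bool)
       \<and> dual_unit_iso C D (lin_bicomod C D :: ('c, 'q, 'f, 'd) bicomod \<Rightarrow> bool)
       \<and> (\<forall>(M :: 'm set) (s :: 'm \<Rightarrow> 'c) (t :: 'm \<Rightarrow> 'd). s ` M \<subseteq> C \<longrightarrow> t ` M \<subseteq> D \<longrightarrow>
            (\<exists>F. iso_mor C (dual C D (lin_of M s t)) (conj_of C M s t) F) \<and>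
            (\<exists>G. iso_mor C (dual C D (conj_of C M s t)) (lin_of M s t) G))"
proof -
  have df1: "dual_functor C D (conj_bicomod C D :: ('c, 'p, 'e, 'd) bicomod \<Rightarrow> bool) (lin_bicomod C D)"
    unfolding dual_functor_def
    by (intro conjI allI impI) (simp_all add: lin_dual dual_mor_mor dual_mor_id dual_mor_comp)
  have df2: "dual_functor C D (lin_bicomod C D :: ('c, 'q, 'f, 'd) bicomod \<Rightarrow> bool) (conj_bicomod C D)"
    unfolding dual_functor_def
    by (intro conjI allI impI) (simp_all add: conj_dual dual_mor_mor dual_mor_id dual_mor_comp)
  have du1: "dual_unit_iso C D (conj_bicomod C D :: ('c, 'p, 'e, 'd) bicomod \<Rightarrow> bool)"
    unfolding dual_unit_iso_def
    by (intro exI[of _ "etam C D"] conjI allI impI) (simp_all add: etam_iso_conj etam_natural)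
  have du2: "dual_unit_iso C D (lin_bicomod C D :: ('c, 'q, 'f, 'd) bicomod \<Rightarrow> bool)"
    unfolding dual_unit_iso_def
    by (intro exI[of _ "etam C D"] conjI allI impI) (simp_all add: etam_iso_lin etam_natural)
  show ?thesis
    apply (intro conjI allI impI)
    apply (rule df1)
    apply (rule df2)
    apply (rule du1)
    apply (rule du2)
    apply (erule (1) span_iso1)
    apply (erule (1) span_iso2)
    done
qed

end
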